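(* Let $(X,d)$ be a metric space and $f:\ell_\infty(X)\to X$. The following are equivalent: (i) there is $q\in(0,1)$ with $L_{s,q}(f)<1$; (ii) there are $q\in(0,1)$ and $p\in[1,\infty)$ with $L_{p,q}(f)<(1-q)^{1/p}$; (iii) for every $q\in(0,1)$ there exists $p\in[1,\infty)$ with $L_{p,q}(f)<(1-q)^{1/p}$.
   Context: $\mathbb{N}^*=\{0,1,2,\dots\}$; $\ell_\infty(X)$ is the set of all bounded sequences $(x_n)_{n\in\mathbb{N}^*}$ in $X$. For $q\in(0,1]$, $d_{s,q}(x,y):=\sup\{q^n d(x_n,y_n):n\in\mathbb{N}^*\}$; for $q\in(0,1)$, $p\in[1,\infty)$, $d_{p,q}(x,y):=\left(\sum_{n=0}^\infty q^n d^p(x_n,y_n)\right)^{1/p}$. $L_{s,q}(f)$, $L_{p,q}(f)$ are the Lipschitz constants (possibly $\infty$) of $f$ with respect to $d_{s,q}$, resp. $d_{p,q}$, on $\ell_\infty(X)$ and $d$ on $X$. *)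

theory Defs
  imports "HOL-Analysis.Analysis"
begin

definition linf :: "(nat \<Rightarrow> 'a::metric_space) set" where
  "linf = {x. bounded (range x)}"

definition d_s :: "real \<Rightarrow> (nat \<Rightarrow> 'a::metric_space) \<Rightarrow> (nat \<Rightarrow> 'a) \<Rightarrow> real" where
  "d_s q x y = (SUP n. q ^ n * dist (x n) (y n))"

definition d_p :: "real \<Rightarrow> real \<Rightarrow> (nat \<Rightarrow> 'a::metric_space) \<Rightarrow> (nat \<Rightarrow> 'a) \<Rightarrow> real" where
  "d_p p q x y = (\<Sum>n. q ^ n * dist (x n) (y n) powr p) powr (1 / p)"

text \<open>Lipschitz constant (possibly infinite) of f : (linf, D) -> (X, dist):
  the infimum of all admissible constants, in the extended reals (Inf {} = \<infinity>).\<close>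
definition lip_const ::
  "((nat \<Rightarrow> 'a::metric_space) \<Rightarrow> (nat \<Rightarrow> 'a) \<Rightarrow> real) \<Rightarrow> ((nat \<Rightarrow> 'a) \<Rightarrow> 'a) \<Rightarrow> ereal" where
  "lip_const D f = Inf {ereal L | L. 0 \<le> L \<and>
      (\<forall>x\<in>linf. \<forall>y\<in>linf. dist (f x) (f y) \<le> L * D x y)}"

end

theory Submission
  imports Defs
begin

lemma lip_less:
  "lip_const D f < ereal r \<longleftrightarrow>
   (\<exists>L. 0 \<le> L \<and> L < r \<and> (\<forall>x\<in>linf. \<forall>y\<in>linf. dist (f x) (f y) \<le> L * D x y))"
  unfolding lip_const_def Inf_less_iff by auto

lemma lin_bnd:
  assumes "x \<in> linf" "y \<in> linf"
  shows "\<exists>B\<ge>0. \<forall>n. dist (x n) (y n) \<le> B"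
proof -
  obtain e1 where e1: "\<forall>z\<in>range x. dist (x 0) z \<le> e1"
    using assms(1) unfolding linf_def using bounded_any_center by blast
  obtain e2 where e2: "\<forall>z\<in>range y. dist (x 0) z \<le> e2"
    using assms(2) unfolding linf_def using bounded_any_center by blast
  have "dist (x n) (y n) \<le> e1 + e2" for n
  proof -
    have "dist (x 0) (x n) \<le> e1" "dist (x 0) (y n) \<le> e2" using e1 e2 by auto
    then show ?thesis using dist_triangle[of "x n" "y n" "x 0"] by (simp add: dist_commute)
  qed
  moreover have "0 \<le> e1" using e1 by (meson zero_le_dist order_trans rangeI)
  moreover have "0 \<le> e2" using e2 by (meson zero_le_dist order_trans rangeI)
  ultimately show ?thesis by (intro exI[of _ "e1+e2"]) auto
qed

lemma lin_summable:
  assumes "x \<in> linf" "y \<in> linf" "0 < q" "q < 1" "0 < p"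
  shows "summable (\<lambda>n. q ^ n * dist (x n) (y n) powr p)"
proof -
  obtain B where B: "B \<ge> 0" "\<forall>n. dist (x n) (y n) \<le> B" using lin_bnd[OF assms(1,2)] by blast
  show ?thesis
  proof (rule summable_comparison_test'[where g = "\<lambda>n. B powr p * q ^ n"])
    show "summable (\<lambda>n. B powr p * q ^ n)"
      using assms by (intro summable_mult summable_geometric) auto
    fix n
    have "dist (x n) (y n) powr p \<le> B powr p" using B assms by (intro powr_mono2) auto
    then show "norm (q ^ n * dist (x n) (y n) powr p) \<le> B powr p * q ^ n"
      using assms by (simp add: mult.commute mult_left_mono)
  qed
qed

lemma pow_powr: "0 < (a::real) \<Longrightarrow> (a ^ n) powr p = (a powr p) ^ n"
proof -
  assume a: "0 < a"
  have "(a ^ n) powr p = (a powr real n) powr p" using a by (simp add: powr_realpow)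
  also have "\<dots> = a powr (real n * p)" by (simp add: powr_powr)
  also have "\<dots> = (a powr p) ^ n" using a by (simp add: powr_power)
  finally show ?thesis .
qed

lemma ds_le_dp:
  assumes "x \<in> linf" "y \<in> linf" "0 < q" "q < 1" "1 \<le> p" "0 < q0" "q0 powr p \<le> q"
  shows "d_s q0 x y \<le> d_p p q x y"
  unfolding d_s_def
proof (rule cSUP_least)
  fix n
  let ?d = "dist (x n) (y n)"
  let ?S = "\<Sum>n. q ^ n * dist (x n) (y n) powr p"
  have summ: "summable (\<lambda>n. q ^ n * dist (x n) (y n) powr p)"
    using lin_summable[OF assms(1-4)] assms(5) by simp
  have "sum (\<lambda>n. q ^ n * dist (x n) (y n) powr p) {n} \<le> ?S"
    by (rule sum_le_suminf[OF summ]) (use assms in auto)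
  then have le: "q ^ n * ?d powr p \<le> ?S" by simp
  have "(q0 ^ n * ?d) powr p = (q0 ^ n) powr p * ?d powr p"
    using assms by (simp add: powr_mult)
  also have "(q0 ^ n) powr p = (q0 powr p) ^ n"
    using assms by (simp add: pow_powr)
  also have "(q0 powr p) ^ n * ?d powr p \<le> q ^ n * ?d powr p"
    using assms by (intro mult_right_mono power_mono) auto
  finally have "(q0 ^ n * ?d) powr p \<le> ?S" using le by linarith
  then have "((q0 ^ n * ?d) powr p) powr (1/p) \<le> ?S powr (1/p)"
    using assms by (intro powr_mono2) auto
  moreover have "((q0 ^ n * ?d) powr p) powr (1/p) = q0 ^ n * ?d"
    using assms by (simp add: powr_powr)
  ultimately show "q0 ^ n * ?d \<le> d_p p q x y" unfolding d_p_def by simp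
qed simp

lemma dp_le_ds:
  assumes "x \<in> linf" "y \<in> linf" "0 < q" "0 < q'" "q' < 1" "1 \<le> p" "q < q' powr p"
  shows "d_p p q x y \<le> (1 - q / q' powr p) powr (-1/p) * d_s q' x y"
proof -
  define r where "r = q / q' powr p"
  define D where "D = d_s q' x y"
  have r: "0 < r" "r < 1" using assms unfolding r_def by auto
  have "q' powr p \<le> 1 powr p" using assms by (intro powr_mono2) auto
  then have q1: "q < 1" using assms by simp
  obtain B where B: "B \<ge> 0" "\<forall>n. dist (x n) (y n) \<le> B" using lin_bnd[OF assms(1,2)] by blast
  have "bdd_above (range (\<lambda>n. q' ^ n * dist (x n) (y n)))"
  proof (rule bdd_aboveI2)
    fix n
    have "q' ^ n \<le> 1" using assms by (simp add: power_le_one)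
    then show "q' ^ n * dist (x n) (y n) \<le> B"
      using B mult_left_le_one_le[of "dist (x n) (y n)" "q' ^ n"] assms
      by (meson order_trans zero_le_dist zero_le_power less_imp_le)
  qed
  then have Dn: "q' ^ n * dist (x n) (y n) \<le> D" for n
    unfolding D_def d_s_def by (meson cSUP_upper UNIV_I)
  have D0: "0 \<le> D" by (rule order_trans[OF zero_le_dist Dn[of 0, simplified]])
  have trm: "q ^ n * dist (x n) (y n) powr p \<le> D powr p * r ^ n" for n
  proof -
    have qn: "0 < q' ^ n" using assms by simp
    have "dist (x n) (y n) \<le> D / q' ^ n" using Dn[of n] qn by (simp add: field_simps)
    then have "dist (x n) (y n) powr p \<le> (D / q' ^ n) powr p"
      using assms by (intro powr_mono2) auto
    also have "\<dots> = D powr p / (q' powr p) ^ n"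
      using assms D0 by (simp add: powr_divide pow_powr)
    finally have "q ^ n * dist (x n) (y n) powr p \<le> q ^ n * (D powr p / (q' powr p) ^ n)"
      using assms by (intro mult_left_mono) auto
    also have "\<dots> = D powr p * r ^ n" unfolding r_def by (simp add: power_divide)
    finally show ?thesis .
  qed
  have sg: "summable (\<lambda>n. D powr p * r ^ n)" using r by (intro summable_mult summable_geometric) auto
  have "(\<Sum>n. q ^ n * dist (x n) (y n) powr p) \<le> (\<Sum>n. D powr p * r ^ n)"
    by (rule suminf_le[OF trm lin_summable sg]) (use assms q1 in auto)
  also have "\<dots> = D powr p / (1 - r)"
    using r by (simp add: suminf_mult suminf_geometric)
  finally have S: "(\<Sum>n. q ^ n * dist (x n) (y n) powr p) \<le> D powr p / (1 - r)" .
  have "d_p p q x y \<le> (D powr p / (1 - r)) powr (1/p)"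
    unfolding d_p_def using assms S
    by (intro powr_mono2) (auto intro!: suminf_nonneg lin_summable simp: q1)
  also have "\<dots> = D / (1 - r) powr (1/p)"
    using r D0 assms by (simp add: powr_divide powr_powr)
  also have "\<dots> = (1 - r) powr (-1/p) * D"
    by (simp add: powr_minus_divide[of _ "1/p", simplified])
  finally show ?thesis unfolding r_def D_def .
qed

lemma powr_to_1: "0 < (q::real) \<Longrightarrow> ((\<lambda>p. q powr (1/p)) \<longlongrightarrow> 1) at_top"
proof -
  assume q: "0 < q"
  have "((\<lambda>p::real. 1/p) \<longlongrightarrow> 0) at_top"
    by (intro tendsto_divide_0[OF tendsto_const] filterlim_at_top_imp_at_infinity filterlim_ident)
  then have "((\<lambda>p. q powr (1/p)) \<longlongrightarrow> q powr 0) at_top" using q by (intro tendsto_intros) auto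
  then show ?thesis using q by simp
qed

theorem mainTheorem12:
  fixes f :: "(nat \<Rightarrow> 'a::metric_space) \<Rightarrow> 'a"
  shows "((\<exists>q. 0 < q \<and> q < 1 \<and> lip_const (d_s q) f < 1)
          \<longleftrightarrow> (\<exists>q p. 0 < q \<and> q < 1 \<and> 1 \<le> p \<and>
                 lip_const (d_p p q) f < ereal ((1 - q) powr (1 / p))))
       \<and> ((\<exists>q p. 0 < q \<and> q < 1 \<and> 1 \<le> p \<and>
                 lip_const (d_p p q) f < ereal ((1 - q) powr (1 / p)))
          \<longleftrightarrow> (\<forall>q. 0 < q \<and> q < 1 \<longrightarrow> (\<exists>p. 1 \<le> p \<and>
                 lip_const (d_p p q) f < ereal ((1 - q) powr (1 / p)))))"
proof -
  have i_iii: "\<exists>p. 1 \<le> p \<and> lip_const (d_p p q) f < ereal ((1 - q) powr (1 / p))"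
    if A: "0 < q0" "q0 < 1" "lip_const (d_s q0) f < 1" "0 < q" "q < 1" for q0 q
  proof -
    obtain L where L: "0 \<le> L" "L < 1"
      "\<forall>x\<in>linf. \<forall>y\<in>linf. dist (f x) (f y) \<le> L * d_s q0 x y"
      using A(3) unfolding one_ereal_def lip_less by blast
    have ev: "eventually (\<lambda>p. q0 < q powr (1/p) \<and> L < (1 - q) powr (1/p) \<and> 1 \<le> p) at_top"
      using order_tendstoD(1)[OF powr_to_1[of q] A(2)]
        order_tendstoD(1)[OF powr_to_1[of "1-q"] L(2)] eventually_ge_at_top[of "1::real"] A
      by (intro eventually_conj) auto
    obtain p where p: "q0 < q powr (1/p)" "L < (1 - q) powr (1/p)" "1 \<le> p"
      using eventually_happens[OF ev] by auto
    have q0p: "q0 powr p \<le> q"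
    proof -
      have "q0 powr p \<le> (q powr (1/p)) powr p" using p A by (intro powr_mono2) auto
      also have "\<dots> = q" using p A by (simp add: powr_powr)
      finally show ?thesis .
    qed
    have "\<forall>x\<in>linf. \<forall>y\<in>linf. dist (f x) (f y) \<le> L * d_p p q x y"
    proof (intro ballI)
      fix x y :: "nat \<Rightarrow> 'a" assume xy: "x \<in> linf" "y \<in> linf"
      have "L * d_s q0 x y \<le> L * d_p p q x y"
        using ds_le_dp[OF xy A(4,5) p(3) A(1) q0p] L by (intro mult_left_mono) auto
      then show "dist (f x) (f y) \<le> L * d_p p q x y" using L(3) xy by force
    qed
    then show ?thesis using p L by (auto simp: lip_less)
  qed
  have ii_i: "\<exists>q. 0 < q \<and> q < 1 \<and> lip_const (d_s q) f < 1"
    if A: "0 < q" "q < 1" "1 \<le> p" "lip_const (d_p p q) f < ereal ((1 - q) powr (1 / p))" for q p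
  proof -
    obtain L where L: "0 \<le> L" "L < (1 - q) powr (1 / p)"
      "\<forall>x\<in>linf. \<forall>y\<in>linf. dist (f x) (f y) \<le> L * d_p p q x y"
      using A(4) unfolding lip_less by blast
    have lim1: "((\<lambda>t::real. t powr p) \<longlongrightarrow> 1 powr p) (at_left 1)"
      by (intro tendsto_intros) auto
    have lim2: "((\<lambda>t::real. L * (1 - q / t powr p) powr (-1/p)) \<longlongrightarrow>
                 L * (1 - q / 1 powr p) powr (-1/p)) (at_left 1)"
      using A by (intro tendsto_intros) auto
    have "L * (1 - q) powr (-1/p) < (1 - q) powr (1/p) * (1 - q) powr (-1/p)"
      using L A by (intro mult_strict_right_mono) auto
    also have "\<dots> = 1" using A by (simp add: powr_add[symmetric])
    finally have lt1: "L * (1 - q / 1 powr p) powr (-1/p) < 1" by simp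
    have ev: "eventually (\<lambda>t. q < t powr p \<and> L * (1 - q / t powr p) powr (-1/p) < 1
                 \<and> 0 < t \<and> t < 1) (at_left (1::real))"
    proof -
      have e1: "eventually (\<lambda>t. q < t powr p) (at_left (1::real))"
        using order_tendstoD(1)[OF lim1] A by simp
      have e2: "eventually (\<lambda>t. 0 < t) (at_left (1::real))"
        by (rule eventually_mono[OF eventually_at_left_real[of 0 1]]) auto
      have e3: "eventually (\<lambda>t. t < 1) (at_left (1::real))"
        by (rule eventually_mono[OF eventually_at_left_real[of 0 1]]) auto
      show ?thesis using e1 e2 e3 order_tendstoD(2)[OF lim2 lt1] by (intro eventually_conj) auto
    qed
    obtain t where t: "q < t powr p" "L * (1 - q / t powr p) powr (-1/p) < 1" "0 < t" "t < 1"
      using eventually_happens[OF ev] by auto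
    define L' where "L' = L * (1 - q / t powr p) powr (-1/p)"
    have "\<forall>x\<in>linf. \<forall>y\<in>linf. dist (f x) (f y) \<le> L' * d_s t x y"
    proof (intro ballI)
      fix x y :: "nat \<Rightarrow> 'a" assume xy: "x \<in> linf" "y \<in> linf"
      have "L * d_p p q x y \<le> L * ((1 - q / t powr p) powr (-1/p) * d_s t x y)"
        using dp_le_ds[OF xy A(1) t(3,4) A(3) t(1)] L by (intro mult_left_mono) auto
      then show "dist (f x) (f y) \<le> L' * d_s t x y" using L(3) xy unfolding L'_def by force
    qed
    moreover have "0 \<le> L'" unfolding L'_def using L by auto
    ultimately have "lip_const (d_s t) f < ereal 1"
      unfolding lip_less using t unfolding L'_def by blast
    then show ?thesis using t by (auto simp: one_ereal_def)
  qed
  show ?thesis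
  proof (intro conjI iffI)
    assume "\<exists>q. 0 < q \<and> q < 1 \<and> lip_const (d_s q) f < 1"
    then obtain q0 where q0: "0 < q0" "q0 < 1" "lip_const (d_s q0) f < 1" by blast
    obtain p where p: "1 \<le> p" "lip_const (d_p p (1/2)) f < ereal ((1 - 1/2) powr (1 / p))"
      using i_iii[OF q0, of "1/2"] by auto
    show "\<exists>q p. 0 < q \<and> q < 1 \<and> 1 \<le> p \<and>
                 lip_const (d_p p q) f < ereal ((1 - q) powr (1 / p))"
      by (rule exI[of _ "1/2"], rule exI[of _ p]) (use p in simp)
  next
    assume "\<exists>q p. 0 < q \<and> q < 1 \<and> 1 \<le> p \<and>
                 lip_const (d_p p q) f < ereal ((1 - q) powr (1 / p))"
    then show "\<exists>q. 0 < q \<and> q < 1 \<and> lip_const (d_s q) f < 1" using ii_i by blast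
  next
    assume "\<exists>q p. 0 < q \<and> q < 1 \<and> 1 \<le> p \<and>
                 lip_const (d_p p q) f < ereal ((1 - q) powr (1 / p))"
    then obtain q0 where q0: "0 < q0" "q0 < 1" "lip_const (d_s q0) f < 1" using ii_i by blast
    show "\<forall>q. 0 < q \<and> q < 1 \<longrightarrow> (\<exists>p. 1 \<le> p \<and>
                 lip_const (d_p p q) f < ereal ((1 - q) powr (1 / p)))"
      using i_iii[OF q0] by blast
  next
    assume "\<forall>q. 0 < q \<and> q < 1 \<longrightarrow> (\<exists>p. 1 \<le> p \<and>
                 lip_const (d_p p q) f < ereal ((1 - q) powr (1 / p)))"
    note h = spec[OF this, of "1/2"]
    obtain p where p: "1 \<le> p" "lip_const (d_p p (1/2)) f < ereal ((1 - 1/2) powr (1 / p))"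
      using h by auto
    show "\<exists>q p. 0 < q \<and> q < 1 \<and> 1 \<le> p \<and>
                 lip_const (d_p p q) f < ereal ((1 - q) powr (1 / p))"
      by (rule exI[of _ "1/2"], rule exI[of _ p]) (use p in simp)
  qed
qed

end
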